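(* Let $\alpha=\alpha(s)$ be a timelike unit speed curve in $\mathbb{S}_1^3$ with geodesic curvature $\kappa_g>0$ and geodesic torsion $\tau_g\neq0$. Then $\alpha$ is congruent to a timelike rectifying curve if and only if $$\frac{\tau_g}{\kappa_g}(s)=\mu_1\sinh(s+s_0)+\mu_2\cosh(s+s_0)$$ for some constants $\mu_1,\mu_2,s_0$ with $\mu_2^2-\mu_1^2<1$.
   Context: Minkowski 4-space $\mathbb{R}_1^4$ is $\mathbb{R}^4$ with $\langle x,y\rangle=-x_1y_1+x_2y_2+x_3y_3+x_4y_4$, $\|x\|=\sqrt{|\langle x,x\rangle|}$. De Sitter 3-space is $\mathbb{S}_1^3=\{x:\langle x,x\rangle=1\}$ with Levi-Civita connection $\overline\nabla$. For a timelike unit speed curve $\alpha(s)$ in $\mathbb{S}_1^3$ ($\langle\alpha',\alpha'\rangle=-1$): $T_\alpha=\alpha'$, $\kappa_g=\|T_\alpha'-\alpha\|$, $N_\alpha=(T_\alpha'-\alpha)/\kappa_g$ (spacelike), $B_\alpha=\alpha\times T_\alpha\times N_\alpha$ (the formal determinant with first row $(-e_1,e_2,e_3,e_4)$ and rows $\alpha,T_\alpha,N_\alpha$), $\tau_g=\langle\overline\nabla_{T_\alpha}N_\alpha,B_\alpha\rangle=\det(\alpha,\alpha',\alpha'',\alpha''')/\kappa_g^2$; Frenet equations $T_\alpha'=\alpha+\kappa_gN_\alpha$, $N_\alpha'=\kappa_gT_\alpha+\tau_gB_\alpha$, $B_\alpha'=-\tau_gN_\alpha$. A timelike non-geodesic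 curve $\alpha$ is a timelike rectifying curve if there is a fixed point $p\in\mathbb{S}_1^3$ with $\pm p\notin\mathrm{Im}(\alpha)$ such that for every $s$ the tangent vector at $\alpha(s)$ of the geodesic of $\mathbb{S}_1^3$ joining $p$ and $\alpha(s)$ is pseudo-orthogonal to $N_\alpha(s)$ (i.e. this geodesic is pseudo-orthogonal to the principal normal geodesic $\cos(t)\alpha(s)+\sin(t)N_\alpha(s)$ at $\alpha(s)$). Congruence is by isometries of $\mathbb{S}_1^3$. *)

theory Defs
  imports "HOL-Analysis.Analysis"
begin

definition mink :: "real^4 \<Rightarrow> real^4 \<Rightarrow> real" where
  "mink x y = - (x$1 * y$1) + x$2 * y$2 + x$3 * y$3 + x$4 * y$4"

definition mnorm :: "real^4 \<Rightarrow> real" where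
  "mnorm x = sqrt \<bar>mink x x\<bar>"

text \<open>A smooth curve on the open interval I together with the family of all its
  derivatives: d 0 = the curve, d (Suc k) = derivative of d k on I.\<close>

definition deriv_family :: "real set \<Rightarrow> (nat \<Rightarrow> real \<Rightarrow> real^4) \<Rightarrow> bool" where
  "deriv_family I d \<longleftrightarrow>
     (\<forall>k. \<forall>s\<in>I. (d k has_vector_derivative d (Suc k) s) (at s))"

definition timelike_unit_dS :: "real set \<Rightarrow> (nat \<Rightarrow> real \<Rightarrow> real^4) \<Rightarrow> bool" where
  "timelike_unit_dS I d \<longleftrightarrow> deriv_family I d \<and>
     (\<forall>s\<in>I. mink (d 0 s) (d 0 s) = 1 \<and> mink (d 1 s) (d 1 s) = -1)"

definition kappa_g :: "(nat \<Rightarrow> real \<Rightarrow> real^4) \<Rightarrow> real \<Rightarrow> real" where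
  "kappa_g d s = mnorm (d 2 s - d 0 s)"

definition normal_g :: "(nat \<Rightarrow> real \<Rightarrow> real^4) \<Rightarrow> real \<Rightarrow> real^4" where
  "normal_g d s = (1 / kappa_g d s) *\<^sub>R (d 2 s - d 0 s)"

definition tau_g :: "(nat \<Rightarrow> real \<Rightarrow> real^4) \<Rightarrow> real \<Rightarrow> real" where
  "tau_g d s = det (vector [d 0 s, d 1 s, d 2 s, d 3 s] :: real^4^4) / (kappa_g d s)^2"

text \<open>Tangent direction at x of the geodesic of de Sitter space joining p and x:
  the pseudo-orthogonal projection of p onto the tangent space at x.\<close>

definition geod_tangent :: "real^4 \<Rightarrow> real^4 \<Rightarrow> real^4" where
  "geod_tangent p x = p - mink p x *\<^sub>R x"

definition timelike_rectifying :: "real set \<Rightarrow> (real \<Rightarrow> real^4) \<Rightarrow> bool" where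
  "timelike_rectifying I \<beta> \<longleftrightarrow>
     (\<exists>d. d 0 = \<beta> \<and> timelike_unit_dS I d \<and> (\<forall>s\<in>I. kappa_g d s > 0) \<and>
        (\<exists>p. mink p p = 1 \<and> (\<forall>s\<in>I. \<beta> s \<noteq> p \<and> \<beta> s \<noteq> - p) \<and>
             (\<forall>s\<in>I. mink (geod_tangent p (\<beta> s)) (normal_g d s) = 0)))"

text \<open>Isometries of de Sitter space: (restrictions of) linear maps of R^4_1
  preserving the Minkowski inner product.\<close>

definition lorentz_iso :: "(real^4 \<Rightarrow> real^4) \<Rightarrow> bool" where
  "lorentz_iso A \<longleftrightarrow> linear A \<and> (\<forall>x y. mink (A x) (A y) = mink x y)"

definition congruent_to_rectifying :: "real set \<Rightarrow> (real \<Rightarrow> real^4) \<Rightarrow> bool" where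
  "congruent_to_rectifying I \<alpha> \<longleftrightarrow>
     (\<exists>A. lorentz_iso A \<and> timelike_rectifying I (A \<circ> \<alpha>))"

end

theory Submission
  imports Defs
begin

lemma sign_tr_comp: "permutation q \<Longrightarrow> sign (Transposition.transpose a b \<circ> q) = (if a = b then 1 else -1) * sign q"
  by (simp add: sign_compose permutation_swap_id sign_swap_id)
lemma perm_tr_comp: "permutation q \<Longrightarrow> permutation (Transposition.transpose a b \<circ> q)"
  by (simp add: permutation_compose permutation_swap_id)
lemma det_4: "det (A::real^4^4) = 0
+ A$1$1 * A$2$2 * A$3$3 * A$4$4
- A$1$1 * A$2$2 * A$3$4 * A$4$3
- A$1$1 * A$2$3 * A$3$2 * A$4$4
+ A$1$1 * A$2$3 * A$3$4 * A$4$2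
+ A$1$1 * A$2$4 * A$3$2 * A$4$3
- A$1$1 * A$2$4 * A$3$3 * A$4$2
- A$1$2 * A$2$1 * A$3$3 * A$4$4
+ A$1$2 * A$2$1 * A$3$4 * A$4$3
+ A$1$2 * A$2$3 * A$3$1 * A$4$4
- A$1$2 * A$2$3 * A$3$4 * A$4$1
- A$1$2 * A$2$4 * A$3$1 * A$4$3
+ A$1$2 * A$2$4 * A$3$3 * A$4$1
+ A$1$3 * A$2$1 * A$3$2 * A$4$4
- A$1$3 * A$2$1 * A$3$4 * A$4$2
- A$1$3 * A$2$2 * A$3$1 * A$4$4
+ A$1$3 * A$2$2 * A$3$4 * A$4$1
+ A$1$3 * A$2$4 * A$3$1 * A$4$2
- A$1$3 * A$2$4 * A$3$2 * A$4$1
- A$1$4 * A$2$1 * A$3$2 * A$4$3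
+ A$1$4 * A$2$1 * A$3$3 * A$4$2
+ A$1$4 * A$2$2 * A$3$1 * A$4$3
- A$1$4 * A$2$2 * A$3$3 * A$4$1
- A$1$4 * A$2$3 * A$3$1 * A$4$2
+ A$1$4 * A$2$3 * A$3$2 * A$4$1
"
proof -
  have f1: "finite {2::4, 3, 4}" "1 \<notin> {2::4, 3, 4}" by auto
  have f2: "finite {3::4, 4}" "2 \<notin> {3::4, 4}" by auto
  have f3: "finite {4::4}" "3 \<notin> {4::4}" by auto
  show ?thesis
    unfolding det_def UNIV_4
    unfolding sum_over_permutations_insert[OF f1]
    unfolding sum_over_permutations_insert[OF f2]
    unfolding sum_over_permutations_insert[OF f3]
    unfolding permutes_sing
    by (simp add: sign_tr_comp perm_tr_comp sign_swap_id permutation_swap_id sign_id swap_id_eq algebra_simps)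
qed

lemma vector_4 [simp]:
 "(vector [x,y,z,w] ::(real^4))$1 = x"
 "(vector [x,y,z,w] ::(real^4))$2 = y"
 "(vector [x,y,z,w] ::(real^4))$3 = z"
 "(vector [x,y,z,w] ::(real^4))$4 = w"
  unfolding vector_def by simp_all

lemma vector_4v [simp]:
 "(vector [x,y,z,w] ::(real^4^4))$1 = x"
 "(vector [x,y,z,w] ::(real^4^4))$2 = y"
 "(vector [x,y,z,w] ::(real^4^4))$3 = z"
 "(vector [x,y,z,w] ::(real^4^4))$4 = w"
  unfolding vector_def by simp_all

definition D :: "real^4 \<Rightarrow> real^4 \<Rightarrow> real^4 \<Rightarrow> real^4 \<Rightarrow> real" where
  "D u v w x = det (vector [u,v,w,x] :: real^4^4)"

lemma D_expl: "D u v w x =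
  u$1 * v$2 * w$3 * x$4 - u$1 * v$2 * w$4 * x$3 - u$1 * v$3 * w$2 * x$4 + u$1 * v$3 * w$4 * x$2 + u$1 * v$4 * w$2 * x$3 - u$1 * v$4 * w$3 * x$2
 - u$2 * v$1 * w$3 * x$4 + u$2 * v$1 * w$4 * x$3 + u$2 * v$3 * w$1 * x$4 - u$2 * v$3 * w$4 * x$1 - u$2 * v$4 * w$1 * x$3 + u$2 * v$4 * w$3 * x$1
 + u$3 * v$1 * w$2 * x$4 - u$3 * v$1 * w$4 * x$2 - u$3 * v$2 * w$1 * x$4 + u$3 * v$2 * w$4 * x$1 + u$3 * v$4 * w$1 * x$2 - u$3 * v$4 * w$2 * x$1
 - u$4 * v$1 * w$2 * x$3 + u$4 * v$1 * w$3 * x$2 + u$4 * v$2 * w$1 * x$3 - u$4 * v$2 * w$3 * x$1 - u$4 * v$3 * w$1 * x$2 + u$4 * v$3 * w$2 * x$1"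
  unfolding D_def det_4 by simp

lemma D_add1: "D (a+b) v w x = D a v w x + D b v w x" by (simp add: D_expl algebra_simps)
lemma D_add2: "D u (a+b) w x = D u a w x + D u b w x" by (simp add: D_expl algebra_simps)
lemma D_add3: "D u v (a+b) x = D u v a x + D u v b x" by (simp add: D_expl algebra_simps)
lemma D_add4: "D u v w (a+b) = D u v w a + D u v w b" by (simp add: D_expl algebra_simps)
lemma D_diff1: "D (a-b) v w x = D a v w x - D b v w x" by (simp add: D_expl algebra_simps)
lemma D_diff2: "D u (a-b) w x = D u a w x - D u b w x" by (simp add: D_expl algebra_simps)
lemma D_diff3: "D u v (a-b) x = D u v a x - D u v b x" by (simp add: D_expl algebra_simps)
lemma D_diff4: "D u v w (a-b) = D u v w a - D u v w b" by (simp add: D_expl algebra_simps)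
lemma D_scale1: "D (c *\<^sub>R a) v w x = c * D a v w x" by (simp add: D_expl algebra_simps)
lemma D_scale2: "D u (c *\<^sub>R a) w x = c * D u a w x" by (simp add: D_expl algebra_simps)
lemma D_scale3: "D u v (c *\<^sub>R a) x = c * D u v a x" by (simp add: D_expl algebra_simps)
lemma D_scale4: "D u v w (c *\<^sub>R a) = c * D u v w a" by (simp add: D_expl algebra_simps)
lemma D_neg4: "D u v w (- a) = - D u v w a" by (simp add: D_expl algebra_simps)
lemma D_alt: "D u u w x = 0" "D u v u x = 0" "D u v w u = 0" "D u v v x = 0" "D u v w v = 0" "D u v w w = 0"
  by (simp_all add: D_expl algebra_simps)
lemma D_swap34: "D u v w x = - D u v x w" by (simp add: D_expl algebra_simps)
lemmas D_lin = D_add1 D_add2 D_add3 D_add4 D_diff1 D_diff2 D_diff3 D_diff4 D_scale1 D_scale2 D_scale3 D_scale4 D_neg4 D_alt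

definition xp :: "real^4 \<Rightarrow> real^4 \<Rightarrow> real^4 \<Rightarrow> real^4" where
  "xp u v w = vector [- D u v w (axis 1 1), D u v w (axis 2 1), D u v w (axis 3 1), D u v w (axis 4 1)]"

lemma mink_xp: "mink (xp u v w) x = D u v w x"
  by (simp add: xp_def mink_def D_expl axis_def algebra_simps)

lemma mink_sym: "mink x y = mink y x" by (simp add: mink_def algebra_simps)
lemma mink_add1: "mink (a+b) y = mink a y + mink b y" by (simp add: mink_def algebra_simps)
lemma mink_add2: "mink x (a+b) = mink x a + mink x b" by (simp add: mink_def algebra_simps)
lemma mink_diff1: "mink (a-b) y = mink a y - mink b y" by (simp add: mink_def algebra_simps)
lemma mink_diff2: "mink x (a-b) = mink x a - mink x b" by (simp add: mink_def algebra_simps)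
lemma mink_scale1: "mink (c *\<^sub>R a) y = c * mink a y" by (simp add: mink_def algebra_simps)
lemma mink_scale2: "mink x (c *\<^sub>R a) = c * mink x a" by (simp add: mink_def algebra_simps)
lemma mink_neg1: "mink (- a) y = - mink a y" by (simp add: mink_def algebra_simps)
lemma mink_neg2: "mink x (- a) = - mink x a" by (simp add: mink_def algebra_simps)
lemma mink_zero: "mink 0 y = 0" "mink x 0 = 0" by (simp_all add: mink_def)
lemmas mink_lin = mink_add1 mink_add2 mink_diff1 mink_diff2 mink_scale1 mink_scale2 mink_neg1 mink_neg2 mink_zero

lemma gram: "mink (xp u v w) (xp u v w) = -(
   mink u u * (mink v v * mink w w - mink v w * mink w v)
 - mink u v * (mink v u * mink w w - mink v w * mink w u)
 + mink u w * (mink v u * mink w v - mink v v * mink w u))"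
  by (simp add: mink_xp D_expl xp_def mink_def axis_def algebra_simps)



lemma comp_deriv: "(f has_vector_derivative f') (at s) \<Longrightarrow> ((\<lambda>s. f s $ i) has_real_derivative f' $ i) (at s)"
proof -
  assume a: "(f has_vector_derivative f') (at s)"
  have "((\<lambda>s. f s $ i) has_derivative (\<lambda>h. (h *\<^sub>R f') $ i)) (at s)"
    using bounded_linear.has_derivative[OF bounded_linear_vec_nth a[unfolded has_vector_derivative_def]] .
  moreover have "(\<lambda>h. (h *\<^sub>R f') $ i) = (*) (f' $ i)" by (auto simp: fun_eq_iff)
  ultimately show ?thesis by (simp add: has_field_derivative_def)
qed

lemma mink_deriv: "(u has_vector_derivative u') (at s) \<Longrightarrow> (v has_vector_derivative v') (at s) \<Longrightarrow>
  ((\<lambda>s. mink (u s) (v s)) has_real_derivative (mink u' (v s) + mink (u s) v')) (at s)"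
  unfolding mink_def
  apply (rule derivative_eq_intros comp_deriv | assumption | rule refl)+
  by (simp add: algebra_simps)

lemma prod4_deriv: "(a has_real_derivative a') (at s) \<Longrightarrow> (b has_real_derivative b') (at s) \<Longrightarrow>
  (c has_real_derivative c') (at s) \<Longrightarrow> (d has_real_derivative d') (at s) \<Longrightarrow>
  ((\<lambda>s. a s * b s * c s * d s) has_real_derivative (a' * b s * c s * d s + a s * b' * c s * d s + a s * b s * c' * d s + a s * b s * c s * d')) (at s)"
  apply (rule derivative_eq_intros | assumption | rule refl)+
  apply (simp add: algebra_simps)
  done

lemma D_deriv: "(u has_vector_derivative u') (at s) \<Longrightarrow> (v has_vector_derivative v') (at s) \<Longrightarrow>
  (w has_vector_derivative w') (at s) \<Longrightarrow> (x has_vector_derivative x') (at s) \<Longrightarrow>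
  ((\<lambda>s. D (u s) (v s) (w s) (x s)) has_real_derivative
     (D u' (v s) (w s) (x s) + D (u s) v' (w s) (x s) + D (u s) (v s) w' (x s) + D (u s) (v s) (w s) x')) (at s)"
  unfolding D_expl
  apply (rule DERIV_cong)
  apply (rule DERIV_add DERIV_diff prod4_deriv comp_deriv | assumption)+
  by (simp add: algebra_simps)


lemma lin_deriv: "linear (A::real^4\<Rightarrow>real^4) \<Longrightarrow> (f has_vector_derivative f') (at s) \<Longrightarrow> ((\<lambda>s. A (f s)) has_vector_derivative A f') (at s)"
proof -
  assume l: "linear A" and a: "(f has_vector_derivative f') (at s)"
  have bl: "bounded_linear A" using l linear_conv_bounded_linear[of A] by blast
  have "((\<lambda>s. A (f s)) has_derivative (\<lambda>h. A (h *\<^sub>R f'))) (at s)"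
    using bounded_linear.has_derivative[OF bl a[unfolded has_vector_derivative_def]] .
  moreover have "(\<lambda>h. A (h *\<^sub>R f')) = (\<lambda>h. h *\<^sub>R A f')" using l by (auto simp: fun_eq_iff linear_cmul)
  ultimately show ?thesis by (simp add: has_vector_derivative_def)
qed

lemma const_deriv0: "open I \<Longrightarrow> s \<in> I \<Longrightarrow> (\<forall>t\<in>I. f t = c) \<Longrightarrow> (f has_real_derivative f') (at s) \<Longrightarrow> f' = (0::real)"
proof -
  assume o: "open I" and s: "s \<in> I" and c: "\<forall>t\<in>I. f t = c" and d: "(f has_real_derivative f') (at s)"
  have "((\<lambda>t. c) has_real_derivative 0) (at s)" by simp
  then have "(f has_real_derivative 0) (at s)"
    using has_field_derivative_transform_within_open[OF _ o s, of "\<lambda>t. c" 0 f] c by auto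
  then show ?thesis using d DERIV_unique by blast
qed

lemma deriv_const_on: "convex I \<Longrightarrow> (\<forall>t\<in>I. (f has_real_derivative 0) (at t)) \<Longrightarrow> s0 \<in> I \<Longrightarrow> t \<in> I \<Longrightarrow> f t = f s0"
proof -
  assume c: "convex I" and d: "\<forall>t\<in>I. (f has_real_derivative 0) (at t)" and s: "s0 \<in> I" "t \<in> I"
  have "\<And>x. x \<in> I \<Longrightarrow> (f has_real_derivative 0) (at x within I)"
    using d has_field_derivative_at_within by blast
  then obtain k where "\<forall>x\<in>I. f x = k"
    using has_field_derivative_zero_constant[OF c] by blast
  then show ?thesis using s by auto
qed

lemma rev_cs:
  fixes v T :: "real^4"
  assumes "mink T T = -1" "mink v T = 0"
  shows "mink v v \<ge> 0"
proof -
  define S where "S = (v$2)^2 + (v$3)^2 + (v$4)^2"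
  define R where "R = (T$2)^2 + (T$3)^2 + (T$4)^2"
  define X where "X = v$2*T$2 + v$3*T$3 + v$4*T$4"
  have t1: "(T$1)^2 = 1 + R" using assms(1) by (simp add: mink_def R_def power2_eq_square)
  have e: "v$1 * T$1 = X" using assms(2) by (simp add: mink_def X_def)
  have lag: "S * R - X^2 =
     (v$2*T$3 - v$3*T$2)^2 + (v$2*T$4 - v$4*T$2)^2 + (v$3*T$4 - v$4*T$3)^2"
    unfolding S_def R_def X_def power2_eq_square by (simp add: algebra_simps)
  have "0 \<le> (v$2*T$3 - v$3*T$2)^2" "0 \<le> (v$2*T$4 - v$4*T$2)^2" "0 \<le> (v$3*T$4 - v$4*T$3)^2" by simp_all
  then have "X^2 \<le> S * R" using lag by linarith
  have S0: "S \<ge> 0" unfolding S_def by simp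
  have R0: "R \<ge> 0" unfolding R_def by simp
  have "(v$1)^2 * (T$1)^2 = X^2" using e by (simp add: power_mult_distrib[symmetric])
  also have "\<dots> \<le> S * R" by fact
  also have "\<dots> \<le> S * (T$1)^2" using t1 S0 by (simp add: mult_left_mono)
  finally have *: "(v$1)^2 * (T$1)^2 \<le> S * (T$1)^2" .
  have "(T$1)^2 > 0" using t1 R0 by simp
  with * have "(v$1)^2 \<le> S" by simp
  then show ?thesis by (simp add: mink_def S_def power2_eq_square)
qed



lemma ders:
  assumes "timelike_unit_dS I d" "t \<in> I"
  shows "(d 0 has_vector_derivative d 1 t) (at t)" "(d 1 has_vector_derivative d 2 t) (at t)"
        "(d 2 has_vector_derivative d 3 t) (at t)"
proof -
  have a: "\<And>k. (d k has_vector_derivative d (Suc k) t) (at t)"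
    using assms unfolding timelike_unit_dS_def deriv_family_def by blast
  show "(d 0 has_vector_derivative d 1 t) (at t)" using a[of 0] by (simp only: One_nat_def)
  show "(d 1 has_vector_derivative d 2 t) (at t)" using a[of 1] by (simp only: One_nat_def numeral_2_eq_2)
  show "(d 2 has_vector_derivative d 3 t) (at t)" using a[of 2] by (simp only: numeral_2_eq_2 numeral_3_eq_3)
qed

lemma basic:
  assumes tl: "timelike_unit_dS I d" and o: "open I" and kp: "\<forall>s\<in>I. kappa_g d s > 0"
  shows "\<forall>t\<in>I. mink (d 0 t) (d 0 t) = 1 \<and> mink (d 1 t) (d 1 t) = -1 \<and> mink (d 0 t) (d 1 t) = 0 \<and>
     mink (d 0 t) (d 2 t) = 1 \<and> mink (d 1 t) (d 2 t) = 0 \<and>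
     mink (d 2 t - d 0 t) (d 2 t - d 0 t) > 0 \<and>
     kappa_g d t = sqrt (mink (d 2 t - d 0 t) (d 2 t - d 0 t))"
proof -
  have n0: "\<forall>t\<in>I. mink (d 0 t) (d 0 t) = 1" and n1: "\<forall>t\<in>I. mink (d 1 t) (d 1 t) = -1"
    using tl unfolding timelike_unit_dS_def by auto
  have a1: "\<forall>t\<in>I. mink (d 0 t) (d 1 t) = 0"
  proof
    fix t assume t: "t \<in> I"
    have dd: "((\<lambda>t. mink (d 0 t) (d 0 t)) has_real_derivative mink (d 1 t) (d 0 t) + mink (d 0 t) (d 1 t)) (at t)"
      using mink_deriv[OF ders(1)[OF tl t] ders(1)[OF tl t]] .
    have "mink (d 1 t) (d 0 t) + mink (d 0 t) (d 1 t) = 0"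
      by (rule const_deriv0[OF o t _ dd]) (use n0 in auto)
    then show "mink (d 0 t) (d 1 t) = 0" using mink_sym[of "d 1 t" "d 0 t"] by linarith
  qed
  have a2: "\<forall>t\<in>I. mink (d 1 t) (d 2 t) = 0"
  proof
    fix t assume t: "t \<in> I"
    have dd: "((\<lambda>t. mink (d 1 t) (d 1 t)) has_real_derivative mink (d 2 t) (d 1 t) + mink (d 1 t) (d 2 t)) (at t)"
      using mink_deriv[OF ders(2)[OF tl t] ders(2)[OF tl t]] .
    have "mink (d 2 t) (d 1 t) + mink (d 1 t) (d 2 t) = 0"
      by (rule const_deriv0[OF o t _ dd]) (use n1 in auto)
    then show "mink (d 1 t) (d 2 t) = 0" using mink_sym[of "d 2 t" "d 1 t"] by linarith
  qed
  have a3: "\<forall>t\<in>I. mink (d 0 t) (d 2 t) = 1"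
  proof
    fix t assume t: "t \<in> I"
    have dd: "((\<lambda>t. mink (d 0 t) (d 1 t)) has_real_derivative mink (d 1 t) (d 1 t) + mink (d 0 t) (d 2 t)) (at t)"
      using mink_deriv[OF ders(1)[OF tl t] ders(2)[OF tl t]] .
    have "mink (d 1 t) (d 1 t) + mink (d 0 t) (d 2 t) = 0"
      by (rule const_deriv0[OF o t _ dd]) (use a1 in auto)
    then show "mink (d 0 t) (d 2 t) = 1" using n1 t by simp
  qed
  show ?thesis
  proof
    fix t assume t: "t \<in> I"
    define v where "v = d 2 t - d 0 t"
    have "mink v (d 1 t) = 0" using a1 a2 t mink_sym[of "d 2 t" "d 1 t"] by (simp add: v_def mink_lin)
    then have m0: "mink v v \<ge> 0" using rev_cs n1 t by blast
    have k: "kappa_g d t = sqrt (mink v v)" using m0 by (simp add: kappa_g_def mnorm_def v_def)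
    have "mink v v \<noteq> 0" using kp t k by auto
    then have "mink v v > 0" using m0 by simp
    then show "mink (d 0 t) (d 0 t) = 1 \<and> mink (d 1 t) (d 1 t) = -1 \<and> mink (d 0 t) (d 1 t) = 0 \<and>
     mink (d 0 t) (d 2 t) = 1 \<and> mink (d 1 t) (d 2 t) = 0 \<and>
     mink (d 2 t - d 0 t) (d 2 t - d 0 t) > 0 \<and>
     kappa_g d t = sqrt (mink (d 2 t - d 0 t) (d 2 t - d 0 t))"
      using n0 n1 a1 a2 a3 t k v_def by auto
  qed
qed

lemma nondeg:
  assumes "D a b c e \<noteq> 0" "mink a y = 0" "mink b y = 0" "mink c y = 0" "mink e y = 0"
  shows "y = 0"
proof -
  define M where "M = (vector [a,b,c,e] :: real^4^4)"
  define z where "z = (vector [- y$1, y$2, y$3, y$4] :: real^4)"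
  have "det M \<noteq> 0" using assms(1) by (simp add: M_def D_def)
  then obtain M' where M': "M' ** M = mat 1" unfolding invertible_det_nz[symmetric] invertible_def by blast
  have "M *v z = 0" using assms(2-5)
    by (simp add: M_def z_def matrix_vector_mult_def sum_4 vec_eq_iff forall_4 mink_def)
  then have "(M' ** M) *v z = 0" by (simp add: matrix_vector_mul_assoc[symmetric])
  then have "z = 0" using M' by (simp add: matrix_vector_mul_lid)
  then show "y = 0" by (simp add: z_def vec_eq_iff forall_4)
qed


lemma frame0:
  assumes tl: "timelike_unit_dS I d" and o: "open I" and kp: "\<forall>s\<in>I. kappa_g d s > 0" and s: "s \<in> I"
  shows "mink (d 0 s) (d 0 s) = 1" "mink (d 1 s) (d 1 s) = -1" "mink (d 0 s) (d 1 s) = 0"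
    "mink (normal_g d s) (normal_g d s) = 1" "mink (d 0 s) (normal_g d s) = 0" "mink (d 1 s) (normal_g d s) = 0"
    "mink (xp (d 0 s) (d 1 s) (normal_g d s)) (d 0 s) = 0"
    "mink (xp (d 0 s) (d 1 s) (normal_g d s)) (d 1 s) = 0"
    "mink (xp (d 0 s) (d 1 s) (normal_g d s)) (normal_g d s) = 0"
    "mink (xp (d 0 s) (d 1 s) (normal_g d s)) (xp (d 0 s) (d 1 s) (normal_g d s)) = 1"
    "d 2 s = d 0 s + kappa_g d s *\<^sub>R normal_g d s"
    "\<And>x. x = mink x (d 0 s) *\<^sub>R d 0 s - mink x (d 1 s) *\<^sub>R d 1 s + mink x (normal_g d s) *\<^sub>R normal_g d s
        + mink x (xp (d 0 s) (d 1 s) (normal_g d s)) *\<^sub>R xp (d 0 s) (d 1 s) (normal_g d s)"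
proof -
  have b: "mink (d 0 s) (d 0 s) = 1 \<and> mink (d 1 s) (d 1 s) = -1 \<and> mink (d 0 s) (d 1 s) = 0 \<and>
     mink (d 0 s) (d 2 s) = 1 \<and> mink (d 1 s) (d 2 s) = 0 \<and>
     mink (d 2 s - d 0 s) (d 2 s - d 0 s) > 0 \<and>
     kappa_g d s = sqrt (mink (d 2 s - d 0 s) (d 2 s - d 0 s))"
    using basic[OF tl o kp] s by blast
  define al where "al = d 0 s"
  define T where "T = d 1 s"
  define v where "v = d 2 s - d 0 s"
  define k where "k = kappa_g d s"
  define N where "N = normal_g d s"
  define B where "B = xp al T N"
  have aa: "mink al al = 1" and tt: "mink T T = -1" and at: "mink al T = 0" and ta: "mink T al = 0"
    using b mink_sym[of al T] by (simp_all add: al_def T_def)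
  have av: "mink al v = 0" using b by (simp add: al_def v_def mink_lin)
  have tv: "mink T v = 0" using b mink_sym[of "d 0 s" "d 1 s"] by (simp add: T_def v_def mink_lin)
  have mv: "mink v v > 0" and kv: "k = sqrt (mink v v)" using b by (simp_all add: v_def k_def)
  have kp0: "k > 0" using mv kv by simp
  have Nv: "N = (1/k) *\<^sub>R v" by (simp add: N_def normal_g_def k_def v_def)
  have nn: "mink N N = 1" using mv kv kp0 by (simp add: Nv mink_lin power2_eq_square[symmetric])
  have an: "mink al N = 0" and tn: "mink T N = 0" using av tv by (simp_all add: Nv mink_lin)
  have na: "mink N al = 0" and nt: "mink N T = 0" using an tn mink_sym[of al N] mink_sym[of T N] by simp_all
  have ba: "mink B al = 0" and bt: "mink B T = 0" and bn: "mink B N = 0"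
    by (simp_all add: B_def mink_xp D_alt)
  have bb: "mink B B = 1"
    unfolding B_def gram using aa tt at ta an na tn nt nn by simp
  have d2: "d 2 s = al + k *\<^sub>R N" using kp0 by (simp add: Nv v_def al_def)
  have ab: "mink al B = 0" and tb: "mink T B = 0" and nb: "mink N B = 0"
    using ba bt bn mink_sym[of al B] mink_sym[of T B] mink_sym[of N B] by simp_all
  have Dne: "D al T N B \<noteq> 0" using bb by (simp add: B_def mink_xp[symmetric])
  have dec: "x = mink x al *\<^sub>R al - mink x T *\<^sub>R T + mink x N *\<^sub>R N + mink x B *\<^sub>R B" for x
  proof -
    define y where "y = x - (mink x al *\<^sub>R al - mink x T *\<^sub>R T + mink x N *\<^sub>R N + mink x B *\<^sub>R B)"
    have "mink al y = 0" "mink T y = 0" "mink N y = 0" "mink B y = 0"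
      unfolding y_def using aa tt at ta an na tn nt nn ab ba tb bt nb bn bb
      by (simp_all add: mink_lin mink_sym[of _ x])
    then have "y = 0" using nondeg[OF Dne] by blast
    then show ?thesis by (simp add: y_def)
  qed
  show "mink (d 0 s) (d 0 s) = 1" "mink (d 1 s) (d 1 s) = -1" "mink (d 0 s) (d 1 s) = 0"
    "mink (normal_g d s) (normal_g d s) = 1" "mink (d 0 s) (normal_g d s) = 0" "mink (d 1 s) (normal_g d s) = 0"
    "mink (xp (d 0 s) (d 1 s) (normal_g d s)) (d 0 s) = 0"
    "mink (xp (d 0 s) (d 1 s) (normal_g d s)) (d 1 s) = 0"
    "mink (xp (d 0 s) (d 1 s) (normal_g d s)) (normal_g d s) = 0"
    "mink (xp (d 0 s) (d 1 s) (normal_g d s)) (xp (d 0 s) (d 1 s) (normal_g d s)) = 1"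
    "d 2 s = d 0 s + kappa_g d s *\<^sub>R normal_g d s"
    using aa tt at nn an tn ba bt bn bb d2 unfolding al_def T_def N_def B_def k_def by simp_all
  show "\<And>x. x = mink x (d 0 s) *\<^sub>R d 0 s - mink x (d 1 s) *\<^sub>R d 1 s + mink x (normal_g d s) *\<^sub>R normal_g d s
        + mink x (xp (d 0 s) (d 1 s) (normal_g d s)) *\<^sub>R xp (d 0 s) (d 1 s) (normal_g d s)"
    using dec unfolding al_def T_def N_def B_def by blast
qed


lemma frame_der:
  assumes tl: "timelike_unit_dS I d" and o: "open I" and kp: "\<forall>s\<in>I. kappa_g d s > 0" and s: "s \<in> I"
  shows "(normal_g d has_vector_derivative (kappa_g d s *\<^sub>R d 1 s + tau_g d s *\<^sub>R xp (d 0 s) (d 1 s) (normal_g d s))) (at s)"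
proof -
  define v where "v = (\<lambda>t. d 2 t - d 0 t)"
  define m where "m = (\<lambda>t. mink (v t) (v t))"
  have bas: "\<forall>t\<in>I. m t > 0 \<and> kappa_g d t = sqrt (m t)"
    using basic[OF tl o kp] by (simp add: m_def v_def)
  have vd: "(v has_vector_derivative (d 3 s - d 1 s)) (at s)"
    unfolding v_def by (rule has_vector_derivative_diff[OF ders(3)[OF tl s] ders(1)[OF tl s]])
  have md: "(m has_real_derivative (mink (d 3 s - d 1 s) (v s) + mink (v s) (d 3 s - d 1 s))) (at s)"
    unfolding m_def by (rule mink_deriv[OF vd vd])
  have mpos: "m s > 0" using bas s by blast
  have kd: "((\<lambda>t. sqrt (m t)) has_real_derivative (inverse (sqrt (m s)) / 2 * (mink (d 3 s - d 1 s) (v s) + mink (v s) (d 3 s - d 1 s)))) (at s)"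
    by (rule DERIV_chain2[OF DERIV_real_sqrt[OF mpos] md])
  then obtain k' where kd: "((\<lambda>t. sqrt (m t)) has_real_derivative k') (at s)" by blast
  have ikd: "((\<lambda>t. inverse (sqrt (m t))) has_real_derivative (- (k' * inverse(sqrt (m s) ^ Suc (Suc 0))))) (at s)"
    by (rule DERIV_inverse_fun[OF kd]) (use mpos in simp)
  have "((\<lambda>t. inverse (sqrt (m t)) *\<^sub>R v t) has_vector_derivative
     (inverse (sqrt (m s)) *\<^sub>R (d 3 s - d 1 s) + (- (k' * inverse(sqrt (m s) ^ Suc (Suc 0)))) *\<^sub>R v s)) (at s)"
    by (rule has_vector_derivative_scaleR[OF ikd vd])
  then obtain N' where Nd0: "((\<lambda>t. inverse (sqrt (m t)) *\<^sub>R v t) has_vector_derivative N') (at s)" by blast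
  have Nd: "(normal_g d has_vector_derivative N') (at s)"
    by (rule has_vector_derivative_transform_within_open[OF Nd0 o s])
       (use bas in \<open>simp add: normal_g_def v_def divide_inverse\<close>)
  have kd': "(kappa_g d has_real_derivative k') (at s)"
    by (rule has_field_derivative_transform_within_open[OF kd o s]) (use bas in simp)
  note F = frame0[OF tl o kp s]
  have i1: "mink (d 0 s) N' = 0"
  proof -
    have dd: "((\<lambda>t. mink (d 0 t) (normal_g d t)) has_real_derivative mink (d 1 s) (normal_g d s) + mink (d 0 s) N') (at s)"
      by (rule mink_deriv[OF ders(1)[OF tl s] Nd])
    have "mink (d 1 s) (normal_g d s) + mink (d 0 s) N' = 0"
      by (rule const_deriv0[OF o s _ dd]) (use frame0[OF tl o kp] in auto)
    then show ?thesis using F(6) by simp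
  qed
  have i2: "mink (d 1 s) N' = - kappa_g d s"
  proof -
    have dd: "((\<lambda>t. mink (d 1 t) (normal_g d t)) has_real_derivative mink (d 2 s) (normal_g d s) + mink (d 1 s) N') (at s)"
      by (rule mink_deriv[OF ders(2)[OF tl s] Nd])
    have "mink (d 2 s) (normal_g d s) + mink (d 1 s) N' = 0"
      by (rule const_deriv0[OF o s _ dd]) (use frame0[OF tl o kp] in auto)
    moreover have "mink (d 2 s) (normal_g d s) = kappa_g d s"
      using F(4,5) by (simp add: F(11) mink_lin)
    ultimately show ?thesis by simp
  qed
  have i3: "mink (normal_g d s) N' = 0"
  proof -
    have dd: "((\<lambda>t. mink (normal_g d t) (normal_g d t)) has_real_derivative mink N' (normal_g d s) + mink (normal_g d s) N') (at s)"
      by (rule mink_deriv[OF Nd Nd])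
    have "mink N' (normal_g d s) + mink (normal_g d s) N' = 0"
      by (rule const_deriv0[OF o s _ dd]) (use frame0[OF tl o kp] in auto)
    then show ?thesis using mink_sym[of N' "normal_g d s"] by simp
  qed
  have d3: "d 3 s = d 1 s + (kappa_g d s *\<^sub>R N' + k' *\<^sub>R normal_g d s)"
  proof -
    have "((\<lambda>t. d 0 t + kappa_g d t *\<^sub>R normal_g d t) has_vector_derivative
        d 1 s + (kappa_g d s *\<^sub>R N' + k' *\<^sub>R normal_g d s)) (at s)"
      by (rule has_vector_derivative_add[OF ders(1)[OF tl s] has_vector_derivative_scaleR[OF kd' Nd]])
    then have "(d 2 has_vector_derivative d 1 s + (kappa_g d s *\<^sub>R N' + k' *\<^sub>R normal_g d s)) (at s)"
      by (rule has_vector_derivative_transform_within_open[OF _ o s]) (use frame0(11)[OF tl o kp] in simp)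
    then show ?thesis using ders(3)[OF tl s] vector_derivative_unique_at by blast
  qed
  have kpos: "kappa_g d s > 0" using kp s by blast
  have tau: "tau_g d s = D (d 0 s) (d 1 s) (normal_g d s) N'"
  proof -
    have "tau_g d s = D (d 0 s) (d 1 s) (d 2 s) (d 3 s) / (kappa_g d s)^2"
      by (simp add: tau_g_def D_def)
    also have "D (d 0 s) (d 1 s) (d 2 s) (d 3 s) = (kappa_g d s)^2 * D (d 0 s) (d 1 s) (normal_g d s) N'"
      unfolding d3 F(11) by (simp add: D_lin power2_eq_square)
    finally show ?thesis using kpos by simp
  qed
  have i4: "mink N' (xp (d 0 s) (d 1 s) (normal_g d s)) = tau_g d s"
    using tau by (simp add: mink_sym[of N'] mink_xp)
  have "N' = kappa_g d s *\<^sub>R d 1 s + tau_g d s *\<^sub>R xp (d 0 s) (d 1 s) (normal_g d s)"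
    using F(12)[of N'] i1 i2 i3 i4 by (simp add: mink_sym[of N'])
  then show ?thesis using Nd by simp
qed


lemma Bx_der:
  assumes tl: "timelike_unit_dS I d" and o: "open I" and kp: "\<forall>s\<in>I. kappa_g d s > 0" and s: "s \<in> I"
  shows "((\<lambda>t. mink (xp (d 0 t) (d 1 t) (normal_g d t)) x) has_real_derivative (- tau_g d s * mink x (normal_g d s))) (at s)"
proof -
  note F = frame0[OF tl o kp s]
  define al where "al = d 0 s"
  define T where "T = d 1 s"
  define N where "N = normal_g d s"
  define B where "B = xp al T N"
  have dd: "((\<lambda>t. D (d 0 t) (d 1 t) (normal_g d t) x) has_real_derivative
     (D (d 1 s) (d 1 s) (normal_g d s) x + D (d 0 s) (d 2 s) (normal_g d s) x
      + D (d 0 s) (d 1 s) (kappa_g d s *\<^sub>R d 1 s + tau_g d s *\<^sub>R xp (d 0 s) (d 1 s) (normal_g d s)) x + D (d 0 s) (d 1 s) (normal_g d s) 0)) (at s)"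
    by (rule D_deriv[OF ders(1)[OF tl s] ders(2)[OF tl s] frame_der[OF tl o kp s] has_vector_derivative_const])
  have e1: "D (d 1 s) (d 1 s) (normal_g d s) x + D (d 0 s) (d 2 s) (normal_g d s) x
      + D (d 0 s) (d 1 s) (kappa_g d s *\<^sub>R d 1 s + tau_g d s *\<^sub>R xp (d 0 s) (d 1 s) (normal_g d s)) x + D (d 0 s) (d 1 s) (normal_g d s) 0
      = tau_g d s * D al T B x"
    unfolding F(11) al_def T_def B_def N_def
    using D_scale4[of _ _ _ 0 0] by (simp add: D_lin)
  have e2: "D al T B x = D al T B (mink x al *\<^sub>R al - mink x T *\<^sub>R T + mink x N *\<^sub>R N + mink x B *\<^sub>R B)"
    using F(12)[of x] unfolding al_def T_def N_def B_def by simp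
  have e3: "D al T B N = - 1"
    using F(10) D_swap34[of al T B N] unfolding al_def T_def N_def B_def by (simp add: mink_xp)
  have "D al T B x = - mink x N" unfolding e2 by (simp add: D_lin e3)
  then have "D (d 1 s) (d 1 s) (normal_g d s) x + D (d 0 s) (d 2 s) (normal_g d s) x
      + D (d 0 s) (d 1 s) (kappa_g d s *\<^sub>R d 1 s + tau_g d s *\<^sub>R xp (d 0 s) (d 1 s) (normal_g d s)) x + D (d 0 s) (d 1 s) (normal_g d s) 0
      = - tau_g d s * mink x (normal_g d s)" using e1 by (simp add: N_def)
  then show ?thesis using dd by (simp add: mink_xp)
qed


lemma fwd_core:
  assumes tl: "timelike_unit_dS I d" and o: "open I" and kp: "\<forall>s\<in>I. kappa_g d s > 0"
    and iv: "is_interval I" and ne: "I \<noteq> {}"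
    and q1: "mink q q = 1" and qn: "\<forall>s\<in>I. mink q (normal_g d s) = 0"
  shows "\<exists>\<mu>1 \<mu>2 s0. \<mu>2^2 - \<mu>1^2 < 1 \<and>
       (\<forall>s\<in>I. tau_g d s / kappa_g d s = \<mu>1 * sinh (s + s0) + \<mu>2 * cosh (s + s0))"
proof -
  have cv: "convex I" using iv by (rule is_interval_convex)
  obtain s1 where s1: "s1 \<in> I" using ne by blast
  define h where "h = (\<lambda>t. mink q (d 0 t))"
  define g where "g = (\<lambda>t. mink q (d 1 t))"
  define kk where "kk = (\<lambda>t. mink (xp (d 0 t) (d 1 t) (normal_g d t)) q)"
  have hd: "(h has_real_derivative g s) (at s)" if s: "s \<in> I" for s
    using mink_deriv[OF has_vector_derivative_const ders(1)[OF tl s], of q] by (simp add: h_def g_def mink_zero)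
  have gd: "(g has_real_derivative h s) (at s)" if s: "s \<in> I" for s
  proof -
    have "(g has_real_derivative mink q (d 2 s)) (at s)"
      using mink_deriv[OF has_vector_derivative_const ders(2)[OF tl s], of q] by (simp add: g_def mink_zero)
    moreover have "mink q (d 2 s) = h s" using qn s by (simp add: frame0(11)[OF tl o kp s] mink_lin h_def)
    ultimately show ?thesis by simp
  qed
  have kkd: "(kk has_real_derivative 0) (at s)" if s: "s \<in> I" for s
    using Bx_der[OF tl o kp s, of q] qn s by (simp add: kk_def)
  define K where "K = kk s1"
  have kkc: "\<forall>t\<in>I. kk t = K" unfolding K_def using deriv_const_on[OF cv _ s1] kkd by blast
  have rel: "kappa_g d s * g s + tau_g d s * K = 0" if s: "s \<in> I" for s
  proof -
    have dd: "((\<lambda>t. mink q (normal_g d t)) has_real_derivative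
        mink 0 (normal_g d s) + mink q (kappa_g d s *\<^sub>R d 1 s + tau_g d s *\<^sub>R xp (d 0 s) (d 1 s) (normal_g d s))) (at s)"
      by (rule mink_deriv[OF has_vector_derivative_const frame_der[OF tl o kp s]])
    have "mink 0 (normal_g d s) + mink q (kappa_g d s *\<^sub>R d 1 s + tau_g d s *\<^sub>R xp (d 0 s) (d 1 s) (normal_g d s)) = 0"
      by (rule const_deriv0[OF o s _ dd]) (use qn in auto)
    then show ?thesis using kkc s mink_sym[of q "xp (d 0 s) (d 1 s) (normal_g d s)"]
      by (simp add: mink_lin g_def kk_def)
  qed
  have qq: "h s ^ 2 - g s ^ 2 + K ^ 2 = 1" if s: "s \<in> I" for s
  proof -
    note F = frame0[OF tl o kp s]
    have "mink q q = mink q (mink q (d 0 s) *\<^sub>R d 0 s - mink q (d 1 s) *\<^sub>R d 1 s + mink q (normal_g d s) *\<^sub>R normal_g d s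
        + mink q (xp (d 0 s) (d 1 s) (normal_g d s)) *\<^sub>R xp (d 0 s) (d 1 s) (normal_g d s))"
      using F(12)[of q] by simp
    also have "\<dots> = h s ^ 2 - g s ^ 2 + K ^ 2"
      using kkc s qn mink_sym[of q "xp (d 0 s) (d 1 s) (normal_g d s)"]
      by (simp add: mink_lin h_def g_def kk_def power2_eq_square)
    finally show ?thesis using q1 by simp
  qed
  have K0: "K \<noteq> 0"
  proof
    assume K: "K = 0"
    have g0: "\<forall>t\<in>I. g t = 0" using rel kp K by (metis add.right_neutral mult_eq_0_iff mult_zero_right less_irrefl)
    have "h s1 = 0" by (rule const_deriv0[OF o s1 g0 gd[OF s1]])
    then show False using qq[OF s1] g0 s1 K by simp
  qed
  define u where "u = (\<lambda>t. (h t + g t) * exp (- t))"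
  define w where "w = (\<lambda>t. (h t - g t) * exp t)"
  have ud: "(u has_real_derivative 0) (at s)" if s: "s \<in> I" for s
  proof -
    have a: "((\<lambda>t. h t + g t) has_real_derivative g s + h s) (at s)" by (rule DERIV_add[OF hd[OF s] gd[OF s]])
    have b: "((\<lambda>t. exp (- t)) has_real_derivative exp (- s) * - 1) (at s)"
      by (auto intro!: derivative_eq_intros)
    have "(u has_real_derivative (g s + h s) * exp (- s) + (exp (- s) * - 1) * (h s + g s)) (at s)"
      unfolding u_def by (rule DERIV_mult[OF a b])
    then show ?thesis by (simp add: algebra_simps)
  qed
  have wd: "(w has_real_derivative 0) (at s)" if s: "s \<in> I" for s
  proof -
    have a: "((\<lambda>t. h t - g t) has_real_derivative g s - h s) (at s)" by (rule DERIV_diff[OF hd[OF s] gd[OF s]])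
    have "(w has_real_derivative (g s - h s) * exp s + exp s * (h s - g s)) (at s)"
      unfolding w_def by (rule DERIV_mult[OF a DERIV_exp])
    then show ?thesis by (simp add: algebra_simps)
  qed
  define C1 where "C1 = u s1"
  define C2 where "C2 = w s1"
  have uc: "\<forall>t\<in>I. u t = C1" unfolding C1_def using deriv_const_on[OF cv _ s1] ud by blast
  have wc: "\<forall>t\<in>I. w t = C2" unfolding C2_def using deriv_const_on[OF cv _ s1] wd by blast
  have hg1: "h t + g t = C1 * exp t" if t: "t \<in> I" for t
    using uc t by (simp add: u_def exp_minus field_simps)
  have hg2: "h t - g t = C2 * exp (- t)" if t: "t \<in> I" for t
    using wc t by (simp add: w_def exp_minus field_simps)
  have prod: "C1 * C2 = 1 - K^2"
  proof -
    have "(h s1 + g s1) * (h s1 - g s1) = C1 * C2"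
      using hg1[OF s1] hg2[OF s1] by (simp add: exp_minus field_simps)
    then show ?thesis using qq[OF s1] by (simp add: power2_eq_square algebra_simps)
  qed
  define m1 where "m1 = - (C1 + C2) / (2 * K)"
  define m2 where "m2 = - (C1 - C2) / (2 * K)"
  show ?thesis
  proof (intro exI conjI ballI)
    have "m2^2 - m1^2 = - (C1 * C2) / K^2"
      using K0 by (simp add: m1_def m2_def power2_eq_square field_simps)
    also have "\<dots> = 1 - 1 / K^2" using prod K0 by (simp add: field_simps)
    also have "\<dots> < 1" using K0 by simp
    finally show "m2^2 - m1^2 < 1" .
  next
    fix s assume s: "s \<in> I"
    have kpos: "kappa_g d s > 0" using kp s by blast
    have gs: "g s = (C1 * exp s - C2 * exp (- s)) / 2" using hg1[OF s] hg2[OF s] by simp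
    have "tau_g d s / kappa_g d s = - g s / K"
      using rel[OF s] kpos K0 by (simp add: field_simps)
    also have "\<dots> = m1 * sinh (s + 0) + m2 * cosh (s + 0)"
      unfolding gs m1_def m2_def using K0
      by (simp add: cosh_plus_sinh[symmetric] cosh_minus_sinh[symmetric] field_simps)
    finally show "tau_g d s / kappa_g d s = m1 * sinh (s + 0) + m2 * cosh (s + 0)" .
  qed
qed


lemma bwd_core:
  assumes tl: "timelike_unit_dS I d" and o: "open I" and kp: "\<forall>s\<in>I. kappa_g d s > 0"
    and iv: "is_interval I" and ne: "I \<noteq> {}"
    and mu: "\<mu>2^2 - \<mu>1^2 < 1"
    and f: "\<forall>s\<in>I. tau_g d s / kappa_g d s = \<mu>1 * sinh (s + s0) + \<mu>2 * cosh (s + s0)"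
  shows "\<exists>p. mink p p = 1 \<and> (\<forall>s\<in>I. d 0 s \<noteq> p \<and> d 0 s \<noteq> - p) \<and>
             (\<forall>s\<in>I. mink (geod_tangent p (d 0 s)) (normal_g d s) = 0)"
proof -
  have cv: "convex I" using iv by (rule is_interval_convex)
  obtain s1 where s1: "s1 \<in> I" using ne by blast
  define ff where "ff = (\<lambda>t. \<mu>1 * sinh (t + s0) + \<mu>2 * cosh (t + s0))"
  define f1 where "f1 = (\<lambda>t. \<mu>1 * cosh (t + s0) + \<mu>2 * sinh (t + s0))"
  have ffd: "(ff has_real_derivative f1 t) (at t)" for t
    unfolding ff_def f1_def by (auto intro!: derivative_eq_intros)
  have f1d: "(f1 has_real_derivative ff t) (at t)" for t
    unfolding ff_def f1_def by (auto intro!: derivative_eq_intros)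
  define c where "c = 1 / sqrt (1 + \<mu>1^2 - \<mu>2^2)"
  have cpos: "c > 0" using mu by (simp add: c_def)
  have c2: "c^2 * (1 + \<mu>1^2 - \<mu>2^2) = 1" using mu by (simp add: c_def power_divide)
  define B where "B = (\<lambda>t. xp (d 0 t) (d 1 t) (normal_g d t))"
  define P where "P = (\<lambda>t. c *\<^sub>R (- f1 t *\<^sub>R d 0 t + ff t *\<^sub>R d 1 t + B t))"
  have Px: "mink (P t) x = c * (- f1 t * mink (d 0 t) x + ff t * mink (d 1 t) x + mink (B t) x)" for t x
    by (simp add: P_def mink_lin)
  have Pd: "((\<lambda>t. mink (P t) x) has_real_derivative 0) (at s)" if s: "s \<in> I" for s x
  proof -
    have a0: "((\<lambda>t. mink (d 0 t) x) has_real_derivative mink (d 1 s) x) (at s)"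
      using mink_deriv[OF ders(1)[OF tl s] has_vector_derivative_const, of x] by (simp add: mink_zero)
    have a1: "((\<lambda>t. mink (d 1 t) x) has_real_derivative mink (d 2 s) x) (at s)"
      using mink_deriv[OF ders(2)[OF tl s] has_vector_derivative_const, of x] by (simp add: mink_zero)
    have a2: "((\<lambda>t. mink (B t) x) has_real_derivative - tau_g d s * mink x (normal_g d s)) (at s)"
      unfolding B_def by (rule Bx_der[OF tl o kp s])
    have "((\<lambda>t. c * (- f1 t * mink (d 0 t) x + ff t * mink (d 1 t) x + mink (B t) x)) has_real_derivative
       c * ((- ff s) * mink (d 0 s) x + mink (d 1 s) x * (- f1 s) + (f1 s * mink (d 1 s) x + mink (d 2 s) x * ff s)
           + - tau_g d s * mink x (normal_g d s))) (at s)"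
      by (intro DERIV_cmult DERIV_add DERIV_minus DERIV_mult f1d ffd a0 a1 a2)
    moreover have "mink (d 2 s) x = mink (d 0 s) x + kappa_g d s * mink (normal_g d s) x"
      by (simp add: frame0(11)[OF tl o kp s] mink_lin)
    moreover have "tau_g d s = ff s * kappa_g d s"
    proof -
      have e: "tau_g d s / kappa_g d s = ff s" using f s by (simp add: ff_def)
      have "kappa_g d s > 0" using kp s by blast
      then show ?thesis using e by (simp add: field_simps)
    qed
    ultimately have "((\<lambda>t. c * (- f1 t * mink (d 0 t) x + ff t * mink (d 1 t) x + mink (B t) x)) has_real_derivative 0) (at s)"
      using mink_sym[of x "normal_g d s"] by (simp add: algebra_simps)
    then show ?thesis unfolding Px .
  qed
  have Pc: "P t = P s1" if t: "t \<in> I" for t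
  proof -
    have e: "mink (P t) x = mink (P s1) x" for x
      using deriv_const_on[OF cv _ s1 t, of "\<lambda>t. mink (P t) x"] Pd by blast
    have h: "mink (P t - P s1) (axis i 1) = 0" for i using e[of "axis i 1"] by (simp add: mink_lin)
    have "(P t - P s1) $ 1 = 0" using h[of 1] by (simp add: mink_def axis_def)
    moreover have "(P t - P s1) $ 2 = 0" using h[of 2] by (simp add: mink_def axis_def)
    moreover have "(P t - P s1) $ 3 = 0" using h[of 3] by (simp add: mink_def axis_def)
    moreover have "(P t - P s1) $ 4 = 0" using h[of 4] by (simp add: mink_def axis_def)
    ultimately show ?thesis by (simp add: vec_eq_iff forall_4)
  qed
  define p where "p = P s1"
  have pN: "mink p (normal_g d s) = 0" and pB: "mink p (B s) = c" if s: "s \<in> I" for s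
  proof -
    note F = frame0[OF tl o kp s]
    have "p = P s" using Pc[OF s] by (simp add: p_def)
    then show "mink p (normal_g d s) = 0" "mink p (B s) = c"
      using F(5,6,7,8,9,10) mink_sym[of "B s" "normal_g d s"] mink_sym[of "d 0 s" "B s"] mink_sym[of "d 1 s" "B s"]
      by (simp_all add: Px B_def)
  qed
  have pp: "mink p p = 1"
  proof -
    note F = frame0[OF tl o kp s1]
    have "mink p p = c^2 * (f1 s1 ^2 - ff s1 ^2 + 1)"
      unfolding p_def P_def using F(1,2,3,7,8,10) mink_sym[of "d 0 s1" "d 1 s1"]
        mink_sym[of "d 0 s1" "B s1"] mink_sym[of "d 1 s1" "B s1"]
      by (simp add: mink_lin B_def power2_eq_square algebra_simps)
    also have "f1 s1 ^2 - ff s1 ^2 = \<mu>1^2 - \<mu>2^2"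
      unfolding f1_def ff_def
      using cosh_square_eq[of "s1 + s0"] by (simp add: power2_eq_square algebra_simps)
    finally show ?thesis using c2 by (simp add: algebra_simps)
  qed
  show ?thesis
  proof (intro exI conjI ballI)
    show "mink p p = 1" by (rule pp)
  next
    fix s assume s: "s \<in> I"
    note F = frame0[OF tl o kp s]
    have "mink (d 0 s) (B s) = 0" using F(7) mink_sym[of "d 0 s" "B s"] by (simp add: B_def)
    then show "d 0 s \<noteq> p" "d 0 s \<noteq> - p" using pB[OF s] cpos by (auto simp: mink_lin)
  next
    fix s assume s: "s \<in> I"
    note F = frame0[OF tl o kp s]
    show "mink (geod_tangent p (d 0 s)) (normal_g d s) = 0"
      using pN[OF s] F(5) by (simp add: geod_tangent_def mink_lin)
  qed
qed


lemma lorentz_surj: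
  assumes "lorentz_iso A" shows "surj A"
proof -
  have lin: "linear A" and mp: "\<And>x y. mink (A x) (A y) = mink x y" using assms by (auto simp: lorentz_iso_def)
  have "\<forall>x. A x = 0 \<longrightarrow> x = 0"
  proof (intro allI impI)
    fix x assume "A x = 0"
    then have h: "mink x y = 0" for y using mp[of x y] by (simp add: mink_zero)
    have "x $ 1 = 0" using h[of "axis 1 1"] by (simp add: mink_def axis_def)
    moreover have "x $ 2 = 0" using h[of "axis 2 1"] by (simp add: mink_def axis_def)
    moreover have "x $ 3 = 0" using h[of "axis 3 1"] by (simp add: mink_def axis_def)
    moreover have "x $ 4 = 0" using h[of "axis 4 1"] by (simp add: mink_def axis_def)
    ultimately show "x = 0" by (simp add: vec_eq_iff forall_4)
  qed
  then have "inj A" using linear_injective_0[OF lin] by blast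
  then show ?thesis using linear_injective_imp_surjective[OF lin] by blast
qed

theorem theorem3p2:
  fixes I :: "real set" and d :: "nat \<Rightarrow> real \<Rightarrow> real^4"
  assumes "open I" and "is_interval I" and "I \<noteq> {}"
    and "timelike_unit_dS I d"
    and "\<forall>s\<in>I. kappa_g d s > 0"
    and "\<forall>s\<in>I. tau_g d s \<noteq> 0"
  shows "congruent_to_rectifying I (d 0) \<longleftrightarrow>
    (\<exists>\<mu>1 \<mu>2 s0. \<mu>2^2 - \<mu>1^2 < 1 \<and>
       (\<forall>s\<in>I. tau_g d s / kappa_g d s = \<mu>1 * sinh (s + s0) + \<mu>2 * cosh (s + s0)))"
proof
  note o = assms(1) and iv = assms(2) and ne = assms(3) and tl = assms(4) and kp = assms(5)
  assume "congruent_to_rectifying I (d 0)"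
  then obtain A d' p where A: "lorentz_iso A" and d'0: "d' 0 = A \<circ> d 0" and tl': "timelike_unit_dS I d'"
    and p1: "mink p p = 1"
    and pc: "\<forall>s\<in>I. mink (geod_tangent p ((A \<circ> d 0) s)) (normal_g d' s) = 0"
    unfolding congruent_to_rectifying_def timelike_rectifying_def by blast
  have lin: "linear A" and mp: "\<And>x y. mink (A x) (A y) = mink x y" using A by (auto simp: lorentz_iso_def)
  have dk: "\<forall>t\<in>I. d' k t = A (d k t)" for k
  proof (induction k)
    case 0 then show ?case by (simp add: d'0)
  next
    case (Suc k)
    show ?case
    proof
      fix t assume t: "t \<in> I"
      have a: "(d' k has_vector_derivative d' (Suc k) t) (at t)"
        using tl' t unfolding timelike_unit_dS_def deriv_family_def by blast
      have "(d k has_vector_derivative d (Suc k) t) (at t)"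
        using tl t unfolding timelike_unit_dS_def deriv_family_def by blast
      then have b: "((\<lambda>s. A (d k s)) has_vector_derivative A (d (Suc k) t)) (at t)"
        by (rule lin_deriv[OF lin])
      have c: "(d' k has_vector_derivative A (d (Suc k) t)) (at t)"
        by (rule has_vector_derivative_transform_within_open[OF b o t]) (use Suc.IH in simp)
      show "d' (Suc k) t = A (d (Suc k) t)" using a c vector_derivative_unique_at by blast
    qed
  qed
  have kap: "kappa_g d' t = kappa_g d t" if t: "t \<in> I" for t
    using dk t mp by (simp add: kappa_g_def mnorm_def linear_diff[OF lin, symmetric])
  have nor: "normal_g d' t = A (normal_g d t)" if t: "t \<in> I" for t
    using dk t kap[OF t] by (simp add: normal_g_def linear_diff[OF lin, symmetric] linear_cmul[OF lin])
  obtain q where q: "A q = p" using lorentz_surj[OF A] by (metis surjD)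
  have q1: "mink q q = 1" using p1 mp[of q q] q by simp
  have qn: "\<forall>s\<in>I. mink q (normal_g d s) = 0"
  proof
    fix s assume s: "s \<in> I"
    have "mink (d 0 s) (normal_g d s) = 0" using frame0(5)[OF tl o kp s] .
    have e: "mink p (normal_g d' s) - mink p (A (d 0 s)) * mink (A (d 0 s)) (normal_g d' s) = 0"
      using pc s by (simp add: geod_tangent_def mink_lin)
    have "mink (A (d 0 s)) (normal_g d' s) = 0"
      using nor[OF s] mp[of "d 0 s" "normal_g d s"] \<open>mink (d 0 s) (normal_g d s) = 0\<close> by simp
    then have "mink p (normal_g d' s) = 0" using e by simp
    then show "mink q (normal_g d s) = 0"
      using nor[OF s] mp[of q "normal_g d s"] q by simp
  qed
  show "\<exists>\<mu>1 \<mu>2 s0. \<mu>2^2 - \<mu>1^2 < 1 \<and>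
       (\<forall>s\<in>I. tau_g d s / kappa_g d s = \<mu>1 * sinh (s + s0) + \<mu>2 * cosh (s + s0))"
    by (rule fwd_core[OF tl o kp iv ne q1 qn])
next
  note o = assms(1) and iv = assms(2) and ne = assms(3) and tl = assms(4) and kp = assms(5)
  assume "\<exists>\<mu>1 \<mu>2 s0. \<mu>2^2 - \<mu>1^2 < 1 \<and>
       (\<forall>s\<in>I. tau_g d s / kappa_g d s = \<mu>1 * sinh (s + s0) + \<mu>2 * cosh (s + s0))"
  then obtain \<mu>1 \<mu>2 s0 where mu: "\<mu>2^2 - \<mu>1^2 < 1"
    and f: "\<forall>s\<in>I. tau_g d s / kappa_g d s = \<mu>1 * sinh (s + s0) + \<mu>2 * cosh (s + s0)" by blast
  obtain p where p: "mink p p = 1" "\<forall>s\<in>I. d 0 s \<noteq> p \<and> d 0 s \<noteq> - p"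
      "\<forall>s\<in>I. mink (geod_tangent p (d 0 s)) (normal_g d s) = 0"
    using bwd_core[OF tl o kp iv ne mu f] by blast
  have "lorentz_iso id" by (simp add: lorentz_iso_def linear_id)
  moreover have "timelike_rectifying I (id \<circ> d 0)"
    unfolding timelike_rectifying_def using tl kp p by auto
  ultimately show "congruent_to_rectifying I (d 0)"
    unfolding congruent_to_rectifying_def by blast
qed


end
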